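(* Let $H\le\mathrm{GL}_n(q)$ and suppose that with respect to a basis $\{v_1,\dots,v_n\}$ of $V=\mathbb{F}_q^n$, every $g\in H$ has the block upper-triangular form $$\begin{pmatrix} g_k & g_{k,k-1} & \cdots & g_{k,1}\\ 0 & g_{k-1} & \cdots & g_{k-1,1}\\ \vdots & & \ddots & \vdots\\ 0 & 0 & \cdots & g_1\end{pmatrix},$$ where each $g\mapsto g_i\in\mathrm{GL}_{n_i}(q)$ is an irreducible representation of $H$ and $n_1+\dots+n_k=n$, and suppose $n_1<n$, so that $H$ stabilises $U=\langle v_{n-n_1+1},\dots,v_n\rangle$. Then there exists $z\in\mathrm{SL}_n(q)$ such that $D(\mathrm{GL}_n(q))\cap H^z\le Z(\mathrm{GL}_n(q))$.
   Context: Matrices act on row vectors from the right. $D(\mathrm{GL}_n(q))$ denotes the diagonal matrices with respect to $\{v_1,\dots,v_n\}$, $Z(\mathrm{GL}_n(q))$ the scalar matrices, and $H^z=z^{-1}Hz$. *)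

theory Defs
  imports "Jordan_Normal_Form.Determinant"
begin

text \<open>Matrices act on row vectors from the right: v g.\<close>
definition row_act :: "'a::comm_semiring_0 vec \<Rightarrow> 'a mat \<Rightarrow> 'a vec" where
  "row_act v A = transpose_mat A *\<^sub>v v"

definition subgroup_GL :: "nat \<Rightarrow> 'a::field mat set \<Rightarrow> bool" where
  "subgroup_GL n H \<longleftrightarrow>
     H \<subseteq> carrier_mat n n \<and> 1\<^sub>m n \<in> H \<and>
     (\<forall>g\<in>H. \<forall>h\<in>H. g * h \<in> H) \<and>
     (\<forall>g\<in>H. \<exists>h\<in>H. g * h = 1\<^sub>m n \<and> h * g = 1\<^sub>m n)"

definition is_subspace :: "nat \<Rightarrow> 'a::field vec set \<Rightarrow> bool" where
  "is_subspace m W \<longleftrightarrow> W \<subseteq> carrier_vec m \<and> 0\<^sub>v m \<in> W \<and>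
     (\<forall>v\<in>W. \<forall>w\<in>W. v + w \<in> W) \<and> (\<forall>c. \<forall>v\<in>W. c \<cdot>\<^sub>v v \<in> W)"

definition irreducible_rep :: "nat \<Rightarrow> 'b set \<Rightarrow> ('b \<Rightarrow> 'a::field mat) \<Rightarrow> bool" where
  "irreducible_rep m H \<rho> \<longleftrightarrow> 0 < m \<and>
     (\<forall>W. is_subspace m W \<and> (\<forall>g\<in>H. \<forall>w\<in>W. row_act w (\<rho> g) \<in> W)
          \<longrightarrow> W = {0\<^sub>v m} \<or> W = carrier_vec m)"

text \<open>Block data: ns = [n_1, ..., n_k]. The block g_i (i = 1..k, list index i-1)
  occupies rows/columns  blk_off n ns (i-1) .. blk_off n ns (i-1) + n_i - 1,
  so g_1 sits in the bottom right corner and g_k in the top left corner.\<close>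
definition blk_off :: "nat \<Rightarrow> nat list \<Rightarrow> nat \<Rightarrow> nat" where
  "blk_off n ns i = n - sum_list (take (Suc i) ns)"

definition diag_block :: "nat \<Rightarrow> nat list \<Rightarrow> nat \<Rightarrow> 'a mat \<Rightarrow> 'a mat" where
  "diag_block n ns i g =
     mat (ns ! i) (ns ! i) (\<lambda>(r, c). g $$ (blk_off n ns i + r, blk_off n ns i + c))"

text \<open>Block upper triangular: the block in block-row i, block-column j vanishes
  whenever block-row i lies below block-column j (i.e. i < j with our numbering).\<close>
definition block_upper_tri :: "nat \<Rightarrow> nat list \<Rightarrow> 'a::zero mat \<Rightarrow> bool" where
  "block_upper_tri n ns g \<longleftrightarrow>
     (\<forall>i j r c. i < j \<and> j < length ns \<and> r < ns ! i \<and> c < ns ! j \<longrightarrow>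
        g $$ (blk_off n ns i + r, blk_off n ns j + c) = 0)"

end

theory Submission
  imports Defs
begin

lemma blk_step:
  assumes "sum_list ns = n" "0 < j" "j < length ns"
  shows "blk_off n ns j + ns ! j = blk_off n ns (j - 1)"
proof -
  have t: "take (Suc j) ns = take j ns @ [ns ! j]" using assms by (simp add: take_Suc_conv_app_nth)
  have "sum_list ns = sum_list (take (Suc j) ns) + sum_list (drop (Suc j) ns)"
    by (metis append_take_drop_id sum_list_append)
  hence le: "sum_list (take j ns) + ns ! j \<le> n" using assms t by simp
  have "Suc (j - 1) = j" using assms by simp
  thus ?thesis unfolding blk_off_def using t le by simp
qed

lemma inv_zero:
  fixes g :: "'a::field mat"
  assumes sl: "sum_list ns = n" and ne: "ns \<noteq> []"
    and bt: "block_upper_tri n ns g"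
    and r: "n - hd ns \<le> r" "r < n" and c: "c < n - hd ns"
  shows "g $$ (r, c) = 0"
proof -
  define m where "m = n - hd ns"
  have b0: "blk_off n ns 0 = m" unfolding blk_off_def m_def using ne
    by (cases ns) auto
  have blast: "blk_off n ns (length ns - 1) = 0" unfolding blk_off_def using ne sl
    by simp
  define j where "j = (LEAST j. blk_off n ns j \<le> c)"
  have jc: "blk_off n ns j \<le> c" unfolding j_def
    by (rule LeastI[of _ "length ns - 1"]) (use blast in simp)
  have jle: "j \<le> length ns - 1" unfolding j_def
    by (rule Least_le) (use blast in simp)
  have j0: "j \<noteq> 0" using jc b0 c m_def by (metis not_le)
  have jl: "j < length ns" using jle ne j0 by (cases ns) auto
  have "\<not> blk_off n ns (j - 1) \<le> c" unfolding j_def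
    by (rule not_less_Least) (use j0 in \<open>simp add: j_def\<close>)
  hence "c - blk_off n ns j < ns ! j" using blk_step[OF sl _ jl] j0 jc by auto
  moreover have "r - m < ns ! 0" using r ne m_def by (cases ns) auto
  ultimately have "g $$ (blk_off n ns 0 + (r - m), blk_off n ns j + (c - blk_off n ns j)) = 0"
    using bt jl j0 unfolding block_upper_tri_def by blast
  thus ?thesis using b0 r jc m_def by simp
qed

theorem mainTheorem11:
  fixes H :: "'a::{finite, field} mat set"
    and n :: nat
    and ns :: "nat list"
  assumes "subgroup_GL n H"
    and "ns \<noteq> []"
    and "\<forall>i<length ns. 0 < ns ! i"
    and "sum_list ns = n"
    and "\<forall>g\<in>H. block_upper_tri n ns g"
    and "\<forall>i<length ns. irreducible_rep (ns ! i) H (diag_block n ns i)"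
    and "hd ns < n"
  shows "\<exists>z \<in> carrier_mat n n. \<exists>zi \<in> carrier_mat n n.
           z * zi = 1\<^sub>m n \<and> zi * z = 1\<^sub>m n \<and> det z = 1 \<and>
           (\<forall>h\<in>H. diagonal_mat (zi * h * z) \<longrightarrow> (\<exists>c. zi * h * z = c \<cdot>\<^sub>m 1\<^sub>m n))"
proof -
  define m where "m = n - hd ns"
  have hd0: "0 < hd ns" using assms(2,3) by (cases ns) auto
  have m0: "0 < m" "m < n" using assms(7) hd0 m_def by auto
  define N :: "'a mat" where "N = mat n n (\<lambda>(i,c). if m \<le> i \<and> c < m then 1 else 0)"
  define z where "z = 1\<^sub>m n - N"
  define zi where "zi = 1\<^sub>m n + N"
  have Nc: "N \<in> carrier_mat n n" unfolding N_def by simp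
  have NN: "N * N = 0\<^sub>m n n"
  proof (rule eq_matI)
    fix i c assume ic: "i < dim_row (0\<^sub>m n n :: 'a mat)" "c < dim_col (0\<^sub>m n n :: 'a mat)"
    have "(N * N) $$ (i, c) = (\<Sum>k\<in>{0..<n}. N $$ (i,k) * N $$ (k,c))"
      using ic Nc by (simp add: scalar_prod_def)
    also have "\<dots> = 0" by (rule sum.neutral) (use ic in \<open>auto simp: N_def\<close>)
    finally show "(N * N) $$ (i, c) = 0\<^sub>m n n $$ (i, c)" using ic by simp
  qed (use Nc in auto)
  have zc: "z \<in> carrier_mat n n" and zic: "zi \<in> carrier_mat n n"
    unfolding z_def zi_def using Nc by auto
  have zzi: "z * zi = 1\<^sub>m n"
  proof -
    have "z * zi = 1\<^sub>m n * (1\<^sub>m n + N) - N * (1\<^sub>m n + N)"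
      unfolding z_def zi_def using Nc by (intro minus_mult_distrib_mat[of _ n n]) auto
    also have "\<dots> = (1\<^sub>m n + N) - (N + N * N)"
      using Nc by (subst mult_add_distrib_mat[of N n n]) auto
    also have "\<dots> = 1\<^sub>m n" using Nc NN by (auto intro!: eq_matI)
    finally show ?thesis .
  qed
  have ziz: "zi * z = 1\<^sub>m n"
  proof -
    have "zi * z = 1\<^sub>m n * (1\<^sub>m n - N) + N * (1\<^sub>m n - N)"
      unfolding z_def zi_def using Nc by (intro add_mult_distrib_mat[of _ n n]) auto
    also have "\<dots> = (1\<^sub>m n - N) + (N - N * N)"
      using Nc by (subst mult_minus_distrib_mat[of N n n]) auto
    also have "\<dots> = 1\<^sub>m n" using Nc NN by (auto intro!: eq_matI)
    finally show ?thesis .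
  qed
  have detz: "det z = 1"
  proof -
    have "det z = prod_list (diag_mat z)"
      by (rule det_lower_triangular[OF _ zc]) (auto simp: z_def N_def)
    also have "diag_mat z = replicate n 1"
      by (rule nth_equalityI) (auto simp: diag_mat_def z_def N_def zc)
    finally show ?thesis by simp
  qed
  have ziE: "\<And>i k. i < n \<Longrightarrow> k < n \<Longrightarrow> zi $$ (i,k) = (if i = k then 1 else 0) + (if m \<le> i \<and> k < m then 1 else 0)"
    by (auto simp: zi_def N_def)
  have main: "\<exists>c. zi * h * z = c \<cdot>\<^sub>m 1\<^sub>m n" if hH: "h \<in> H" and dg: "diagonal_mat (zi * h * z)" for h
  proof -
    have hc: "h \<in> carrier_mat n n" using hH assms(1) unfolding subgroup_GL_def by auto
    define A where "A = zi * h * z"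
    have Ac: "A \<in> carrier_mat n n" unfolding A_def using hc zc zic by auto
    have Adg: "\<And>i k. i < n \<Longrightarrow> k < n \<Longrightarrow> i \<noteq> k \<Longrightarrow> A $$ (i,k) = 0"
      using dg Ac unfolding A_def[symmetric] diagonal_mat_def by auto
    have eq: "zi * h = A * zi"
    proof -
      have "A * zi = zi * h * (z * zi)" unfolding A_def using hc zc zic
        by (metis assoc_mult_mat mult_carrier_mat)
      thus ?thesis using zzi hc zic by simp
    qed
    define d where "d = (\<lambda>i. A $$ (i,i))"
    have rhs: "(A * zi) $$ (i,c) = d i * zi $$ (i,c)" if "i < n" "c < n" for i c
    proof -
      have "(A * zi) $$ (i,c) = (\<Sum>k\<in>{0..<n}. A $$ (i,k) * zi $$ (k,c))"
        using that Ac zic by (simp add: scalar_prod_def)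
      also have "\<dots> = (\<Sum>k\<in>{0..<n}. if k = i then A $$ (i,k) * zi $$ (k,c) else 0)"
        by (rule sum.cong) (auto simp: Adg that)
      also have "\<dots> = d i * zi $$ (i,c)" using that by (simp add: d_def)
      finally show ?thesis .
    qed
    have lhs: "(zi * h) $$ (i,c) = h $$ (i,c) + (if m \<le> i then (\<Sum>k\<in>{0..<m}. h $$ (k,c)) else 0)"
      if "i < n" "c < n" for i c
    proof -
      have "(zi * h) $$ (i,c) = (\<Sum>k\<in>{0..<n}. zi $$ (i,k) * h $$ (k,c))"
        using that hc zic by (simp add: scalar_prod_def)
      also have "\<dots> = (\<Sum>k\<in>{0..<n}. (if k = i then h $$ (k,c) else 0) + (if m \<le> i \<and> k < m then h $$ (k,c) else 0))"
        by (rule sum.cong) (auto simp: ziE that distrib_right)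
      also have "\<dots> = h $$ (i,c) + (\<Sum>k\<in>{0..<n}. (if m \<le> i \<and> k < m then h $$ (k,c) else 0))"
        using that by (simp add: sum.distrib)
      also have "(\<Sum>k\<in>{0..<n}. (if m \<le> i \<and> k < m then h $$ (k,c) else 0)) = (if m \<le> i then (\<Sum>k\<in>{0..<m}. h $$ (k,c)) else 0)"
      proof (cases "m \<le> i")
        case True
        have "(\<Sum>k\<in>{0..<n}. (if k < m then h $$ (k,c) else 0)) = (\<Sum>k\<in>{k\<in>{0..<n}. k < m}. h $$ (k,c))"
          by (rule sum.inter_filter[symmetric]) simp
        also have "{k\<in>{0..<n}. k < m} = {0..<m}" using m0 by auto
        finally show ?thesis using True by simp
      qed simp
      finally show ?thesis .
    qed
    have top: "h $$ (i,c) = (if i = c then d i else 0)" if "i < m" "c < n" for i c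
      using lhs[of i c] rhs[of i c] eq ziE[of i c] that m0 by auto
    have sumtop: "(\<Sum>k\<in>{0..<m}. h $$ (k,c)) = d c" if "c < m" for c
    proof -
      have "(\<Sum>k\<in>{0..<m}. h $$ (k,c)) = (\<Sum>k\<in>{0..<m}. if k = c then d k else 0)"
        by (rule sum.cong) (use top m0 that in auto)
      thus ?thesis using that by simp
    qed
    have low: "d j = d c" if "m \<le> j" "j < n" "c < m" for j c
    proof -
      have h0: "h $$ (j,c) = 0"
        using inv_zero[OF assms(4,2)] assms(5) hH that m_def by blast
      have "(zi * h) $$ (j,c) = d j"
        proof -
        have "(zi * h) $$ (j,c) = (A * zi) $$ (j,c)" by (simp only: eq)
        also have "\<dots> = d j * zi $$ (j,c)" using rhs that m0 by simp
        also have "zi $$ (j,c) = 1" using ziE[of j c] that m0 by simp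
        finally show ?thesis by simp
      qed
      thus ?thesis using lhs[of j c] h0 sumtop[of c] that m0 by simp
    qed
    have alld: "d i = d 0" if "i < n" for i
    proof (cases "i < m")
      case True
      then show ?thesis using low[of m i] low[of m 0] m0 by simp
    next
      case False
      then show ?thesis using low[of i 0] that m0 by simp
    qed
    have "A = d 0 \<cdot>\<^sub>m 1\<^sub>m n"
    proof (rule eq_matI)
      fix i k assume ik: "i < dim_row (d 0 \<cdot>\<^sub>m 1\<^sub>m n)" "k < dim_col (d 0 \<cdot>\<^sub>m 1\<^sub>m n)"
      hence ik': "i < n" "k < n" by auto
      show "A $$ (i, k) = (d 0 \<cdot>\<^sub>m 1\<^sub>m n) $$ (i, k)"
      proof (cases "i = k")
        case True
        have "A $$ (i, k) = d i" using True by (simp add: d_def)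
        also have "\<dots> = d 0" using alld ik' by blast
        finally show ?thesis using True ik' by simp
      next
        case False
        thus ?thesis using Adg ik' by simp
      qed
    qed (use Ac in auto)
    thus ?thesis unfolding A_def by blast
  qed
  show ?thesis using zc zic zzi ziz detz main by blast
qed

end
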